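(* Let $G$ be a connected graph with $|G|$ vertices and let $(u,v)\in V_p$. If $r_w(u,v)=\frac{1}{|G|}$ for every $w\in V(G)$, then $d(u,v)$ is odd.
   Context: Graphs are finite, simple and connected; $d(u,v)$ denotes the shortest-path distance and $|G|$ the number of vertices. $V_p$ denotes the set of all unordered pairs $(u,v)$ of distinct vertices. A vertex $x$ resolves the pair $(u,v)$ if $d(x,u)\neq d(x,v)$. For $(u,v)\in V_p$, $R(u,v)$ is the set of all vertices resolving $(u,v)$. The resolving share of a vertex $w$ for $(u,v)$ is $r_w(u,v)=\frac{1}{|R(u,v)|}$ if $w$ resolves $u$ and $v$, and $r_w(u,v)=0$ otherwise. *)

theory Defs
  imports Complex_Main
begin

definition simple_graph :: "'a set \<Rightarrow> ('a \<Rightarrow> 'a \<Rightarrow> bool) \<Rightarrow> bool" where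
  "simple_graph V E \<longleftrightarrow> finite V \<and> V \<noteq> {} \<and>
     (\<forall>x y. E x y \<longrightarrow> x \<in> V \<and> y \<in> V) \<and>
     (\<forall>x y. E x y \<longrightarrow> E y x) \<and> (\<forall>x. \<not> E x x)"

fun walk :: "('a \<Rightarrow> 'a \<Rightarrow> bool) \<Rightarrow> 'a list \<Rightarrow> bool" where
  "walk E [] = False"
| "walk E [x] = True"
| "walk E (x # y # xs) = (E x y \<and> walk E (y # xs))"

definition reachable_in :: "('a \<Rightarrow> 'a \<Rightarrow> bool) \<Rightarrow> 'a \<Rightarrow> 'a \<Rightarrow> nat \<Rightarrow> bool" where
  "reachable_in E x y n \<longleftrightarrow>
     (\<exists>p. walk E p \<and> hd p = x \<and> last p = y \<and> length p = Suc n)"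

definition connected_graph :: "'a set \<Rightarrow> ('a \<Rightarrow> 'a \<Rightarrow> bool) \<Rightarrow> bool" where
  "connected_graph V E \<longleftrightarrow> simple_graph V E \<and>
     (\<forall>x\<in>V. \<forall>y\<in>V. \<exists>n. reachable_in E x y n)"

definition graph_dist :: "('a \<Rightarrow> 'a \<Rightarrow> bool) \<Rightarrow> 'a \<Rightarrow> 'a \<Rightarrow> nat" where
  "graph_dist E x y = (LEAST n. reachable_in E x y n)"

definition resolves :: "('a \<Rightarrow> 'a \<Rightarrow> bool) \<Rightarrow> 'a \<Rightarrow> 'a \<Rightarrow> 'a \<Rightarrow> bool" where
  "resolves E x u v \<longleftrightarrow> graph_dist E x u \<noteq> graph_dist E x v"

definition resolving_set :: "'a set \<Rightarrow> ('a \<Rightarrow> 'a \<Rightarrow> bool) \<Rightarrow> 'a \<Rightarrow> 'a \<Rightarrow> 'a set" where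
  "resolving_set V E u v = {x \<in> V. resolves E x u v}"

definition resolving_share :: "'a set \<Rightarrow> ('a \<Rightarrow> 'a \<Rightarrow> bool) \<Rightarrow> 'a \<Rightarrow> 'a \<Rightarrow> 'a \<Rightarrow> real" where
  "resolving_share V E w u v =
     (if resolves E w u v then 1 / real (card (resolving_set V E u v)) else 0)"

end

theory Submission
  imports Defs
begin

lemma last_take_Suc: "m < length p \<Longrightarrow> last (take (Suc m) p) = p ! m"
  by (simp add: take_Suc_conv_app_nth)

lemma walk_ne: "walk E p \<Longrightarrow> p \<noteq> []" by (cases p) auto

lemma walk_app: "walk E p \<Longrightarrow> walk E q \<Longrightarrow> last p = hd q \<Longrightarrow> walk E (p @ tl q)"
proof (induction E p rule: walk.induct)
  case (2 E x) then show ?case by (cases q rule: list.exhaust) auto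
qed auto

lemma walk_snoc: "walk E (xs @ [y]) \<Longrightarrow> E y z \<Longrightarrow> walk E (xs @ [y, z])"
  by (induction E xs rule: walk.induct) auto

lemma walk_snoc2: "walk E (xs @ [y]) \<Longrightarrow> E y z \<Longrightarrow> walk E ((xs @ [y]) @ [z])"
  using walk_snoc by fastforce

lemma walk_rev: "\<forall>x y. E x y \<longrightarrow> E y x \<Longrightarrow> walk E p \<Longrightarrow> walk E (rev p)"
proof (induction E p rule: walk.induct)
  case (3 E x y xs)
  then have "walk E (rev xs @ [y])" by simp
  then show ?case using 3 walk_snoc2[of E "rev xs" y x] by simp
qed auto

lemma walk_take: "walk E p \<Longrightarrow> walk E (take (Suc n) p)"
proof (induction E p arbitrary: n rule: walk.induct)
  case (3 E x y xs) then show ?case by (cases n) auto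
qed auto

lemma walk_drop: "walk E p \<Longrightarrow> n < length p \<Longrightarrow> walk E (drop n p)"
proof (induction E p arbitrary: n rule: walk.induct)
  case (3 E x y xs) then show ?case by (cases n) auto
qed auto

lemma reach_trans: "reachable_in E x y a \<Longrightarrow> reachable_in E y z b \<Longrightarrow> reachable_in E x z (a + b)"
proof -
  assume "reachable_in E x y a" "reachable_in E y z b"
  then obtain p q where p: "walk E p" "hd p = x" "last p = y" "length p = Suc a"
    and q: "walk E q" "hd q = y" "last q = z" "length q = Suc b"
    unfolding reachable_in_def by blast
  have "walk E (p @ tl q)" using walk_app[OF p(1) q(1)] p(3) q(2) by simp
  moreover have "hd (p @ tl q) = x" using p by (cases p) auto
  moreover have "last (p @ tl q) = z" using p q
    by (cases q; cases "tl q") auto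
  moreover have "length (p @ tl q) = Suc (a + b)" using p q by simp
  ultimately show ?thesis unfolding reachable_in_def by blast
qed

lemma reach_sym: "\<forall>x y. E x y \<longrightarrow> E y x \<Longrightarrow> reachable_in E x y a \<Longrightarrow> reachable_in E y x a"
  unfolding reachable_in_def
  by (metis walk_rev walk_ne hd_rev last_rev length_rev)

lemma reach_split: "reachable_in E x y n \<Longrightarrow> m \<le> n \<Longrightarrow>
   \<exists>w. reachable_in E x w m \<and> reachable_in E w y (n - m)"
proof -
  assume "reachable_in E x y n" "m \<le> n"
  then obtain p where p: "walk E p" "hd p = x" "last p = y" "length p = Suc n"
    unfolding reachable_in_def by blast
  define w where "w = p ! m"
  have "reachable_in E x w m" unfolding reachable_in_def
    apply (rule exI[of _ "take (Suc m) p"])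
    using p \<open>m \<le> n\<close> walk_take[OF p(1)] by (auto simp: w_def hd_take last_take_Suc)
  moreover have "reachable_in E w y (n - m)" unfolding reachable_in_def
    apply (rule exI[of _ "drop m p"])
    using p \<open>m \<le> n\<close> walk_drop[OF p(1), of m] by (auto simp: w_def hd_drop_conv_nth)
  ultimately show ?thesis by blast
qed

lemma dist_reach: "reachable_in E x y n \<Longrightarrow> reachable_in E x y (graph_dist E x y) \<and> graph_dist E x y \<le> n"
  unfolding graph_dist_def by (metis LeastI Least_le)

theorem lemma2p11:
  fixes V :: "'a set" and E :: "'a \<Rightarrow> 'a \<Rightarrow> bool" and u v :: 'a
  assumes "connected_graph V E"
    and "u \<in> V" and "v \<in> V" and "u \<noteq> v"
    and "\<forall>w\<in>V. resolving_share V E w u v = 1 / real (card V)"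
  shows "odd (graph_dist E u v)"
proof (rule ccontr)
  assume ev: "\<not> odd (graph_dist E u v)"
  have sg: "simple_graph V E" and con: "\<forall>x\<in>V. \<forall>y\<in>V. \<exists>n. reachable_in E x y n"
    using assms(1) unfolding connected_graph_def by auto
  have sym: "\<forall>x y. E x y \<longrightarrow> E y x" and inV: "\<forall>x y. E x y \<longrightarrow> x \<in> V \<and> y \<in> V"
    and fin: "finite V" "V \<noteq> {}" using sg unfolding simple_graph_def by auto
  have cpos: "card V > 0" using fin by (simp add: card_gt_0_iff)
  define k where "k = graph_dist E u v"
  obtain n where rn: "reachable_in E u v n" using con assms(2,3) by blast
  then have rk: "reachable_in E u v k" unfolding k_def using dist_reach[OF rn] by simp
  obtain h where h: "k = 2 * h" using ev k_def by (auto elim: evenE)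
  obtain w where w1: "reachable_in E u w h" and w2: "reachable_in E w v h"
    using reach_split[OF rk, of h] h by auto
  have wV: "w \<in> V"
  proof (cases "h = 0")
    case True
    then have "w = u" using w1 unfolding reachable_in_def
      by (metis One_nat_def length_Suc_conv hd_Cons_tl last_ConsL list.sel(1) list.discI length_0_conv)
    then show ?thesis using assms(2) by simp
  next
    case False
    then obtain p where p: "walk E p" "hd p = w" "length p = Suc h"
      using w2 unfolding reachable_in_def by blast
    then obtain a b xs where "p = a # b # xs" using False
      by (metis Suc_length_conv length_0_conv not0_implies_Suc)
    then show ?thesis using p inV by auto
  qed
  have d1: "graph_dist E w u \<le> h" using dist_reach[OF reach_sym[OF sym w1]] by simp
  have d2: "graph_dist E w v \<le> h" using dist_reach[OF w2] by simp
  have wu: "reachable_in E w u h" using reach_sym[OF sym w1] .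
  have ra: "reachable_in E w u (graph_dist E w u)" using dist_reach[OF wu] by simp
  have rb: "reachable_in E w v (graph_dist E w v)" using dist_reach[OF w2] by simp
  have ruv: "reachable_in E u v (graph_dist E w u + graph_dist E w v)"
    using reach_trans[OF reach_sym[OF sym ra] rb] .
  have "k \<le> graph_dist E w u + graph_dist E w v" using dist_reach[OF ruv] unfolding k_def by simp
  then have eq: "graph_dist E w u = graph_dist E w v" using d1 d2 h by linarith
  have "resolving_share V E w u v = 0"
    unfolding resolving_share_def resolves_def using eq by simp
  then show False using assms(5) wV cpos by auto
qed

end
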